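(* Let $m\ge n$, $B\in\mathbb R^{n\times m}$ of full row rank, $f:\mathbb R^m\to\mathbb R$, $h:\mathbb R^n\to\mathbb R$ convex and continuously differentiable with Lipschitz gradients, $\mathcal L(u,p)=f(u)-h(p)+(Bu,p)$, and let $(u^*,p^* )$ be the saddle point of $\mathcal L$. Let $\mathcal I_{\mathcal V}$ ($m\times m$) and $\mathcal I_{\mathcal Q}$ ($n\times n$) be symmetric positive definite. Assume $f\in\mathcal S^{1,1}_{\mu_{f,\mathcal I_{\mathcal V}},L_{f,\mathcal I_{\mathcal V}}}$ with respect to $\mathcal I_{\mathcal V}$ with $0<\mu_{f,\mathcal I_{\mathcal V}}\le L_{f,\mathcal I_{\mathcal V}}<2$. Define the Lyapunov function $\mathcal E(u,p)=\frac12\|u-u^*\|^2_{\mathcal I_{\mathcal V}}+\frac12\|p-p^*\|^2_{\mathcal I_{\mathcal Q}}$ and the transformed primal-dual (TPD) vector field $\mathcal G=(\mathcal G^u,\mathcal G^p)$, $$\mathcal G^u(u,p)=-\mathcal I_{\mathcal V}^{-1}(\nabla f(u)+B^\top p),\qquad \mathcal G^p(u,p)=-\mathcal I_{\mathcal Q}^{-1}\big(\nabla h_B(p)-Be(u)\big).$$ Then for all $(u,p)$, $$-\nabla\mathcal E(u,p)\cdot\mathcal G(u,p)\ \ge\ \mu\,\mathcal E(u,p)+\frac{\mu_{f,\mathcal I_{\mathcal V}}}{2}\|v-v^*\|^2_{\mathcal I_{\mathcal V}},$$ where $\mu=\min\{\mu_{\mathcal V},\mu_{\mathcal Q}\}>0$,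 $v=u+\mathcal I_{\mathcal V}^{-1}B^\top p$, $v^*=u^*+\mathcal I_{\mathcal V}^{-1}B^\top p^*$. Consequently, if $(u(t),p(t))$ solves $u'=\mathcal G^u(u,p)$, $p'=\mathcal G^p(u,p)$, then $\mathcal E(u(t),p(t))\le e^{-\mu t}\mathcal E(u(0),p(0))$ for all $t>0$.
   Context: $(\cdot,\cdot)$ is the Euclidean inner product; for SPD $M$, $\|x\|_M=(Mx,x)^{1/2}$. A saddle point satisfies $\nabla f(u^* )+B^\top p^*=0$, $Bu^*=\nabla h(p^* )$. Bregman divergence: $D_g(y,x)=g(y)-g(x)-(\nabla g(x),y-x)$; $g\in\mathcal S^{1,1}_{\mu_{g,M},L_{g,M}}$ with respect to SPD $M$ means $\frac{\mu_{g,M}}{2}\|x-y\|_M^2\le D_g(y,x)\le\frac{L_{g,M}}{2}\|x-y\|_M^2$ for all $x,y$. Here $e(u)=u-\mathcal I_{\mathcal V}^{-1}\nabla f(u)$ and $h_B(p)=h(p)+\frac12(B\mathcal I_{\mathcal V}^{-1}B^\top p,p)$; $\mu_{h_B,\mathcal I_{\mathcal Q}}>0$ denotes the strong convexity constant of $h_B$ with respect to $\mathcal I_{\mathcal Q}$. Constants: $\mu_{\mathcal V}=\mu_{f,\mathcal I_{\mathcal V}}$ and $\mu_{\mathcal Q}=(2-L_{f,\mathcal I_{\mathcal V}})\mu_{h_B,\mathcal I_{\mathcal Q}}$. The expression $\nabla\mathcal E(u,p)\cdot\mathcal G(u,p)$ means $(\mathcal I_{\mathcal V}(u-u^* ),\mathcal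 G^u(u,p))+(\mathcal I_{\mathcal Q}(p-p^* ),\mathcal G^p(u,p))$. *)

theory Defs
  imports "HOL-Analysis.Analysis"
begin

definition Mnorm :: "real^'n^'n \<Rightarrow> real^'n \<Rightarrow> real" where
  "Mnorm M x = sqrt (x \<bullet> (M *v x))"

definition spd :: "real^'n^'n \<Rightarrow> bool" where
  "spd M \<longleftrightarrow> transpose M = M \<and> (\<forall>x. x \<noteq> 0 \<longrightarrow> 0 < x \<bullet> (M *v x))"

definition bregman :: "('a::real_inner \<Rightarrow> real) \<Rightarrow> ('a \<Rightarrow> 'a) \<Rightarrow> 'a \<Rightarrow> 'a \<Rightarrow> real" where
  "bregman g dg y x = g y - g x - dg x \<bullet> (y - x)"

definition S11 :: "(real^'n \<Rightarrow> real) \<Rightarrow> (real^'n \<Rightarrow> real^'n) \<Rightarrow> real \<Rightarrow> real \<Rightarrow> real^'n^'n \<Rightarrow> bool" where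
  "S11 g dg mu L M \<longleftrightarrow>
     (\<forall>x y. mu / 2 * (Mnorm M (x - y))\<^sup>2 \<le> bregman g dg y x
          \<and> bregman g dg y x \<le> L / 2 * (Mnorm M (x - y))\<^sup>2)"

definition strongly_convex_wrt :: "(real^'n \<Rightarrow> real) \<Rightarrow> (real^'n \<Rightarrow> real^'n) \<Rightarrow> real \<Rightarrow> real^'n^'n \<Rightarrow> bool" where
  "strongly_convex_wrt g dg mu M \<longleftrightarrow>
     (\<forall>x y. mu / 2 * (Mnorm M (x - y))\<^sup>2 \<le> bregman g dg y x)"

definition lipschitz_map :: "('a::real_normed_vector \<Rightarrow> 'b::real_normed_vector) \<Rightarrow> bool" where
  "lipschitz_map F \<longleftrightarrow> (\<exists>K. \<forall>x y. norm (F x - F y) \<le> K * norm (x - y))"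

end

theory Submission imports Defs begin

lemma adj: fixes A :: "real^'n^'m" shows "(A *v x) \<bullet> y = x \<bullet> (transpose A *v y)"
  by (metis dot_lmul_matrix inner_commute transpose_matrix_vector)

lemma spd_inv: fixes M :: "real^'n^'n" assumes "spd M"
  shows "M ** matrix_inv M = mat 1" "matrix_inv M ** M = mat 1"
proof -
  have "\<forall>x. M *v x = 0 \<longrightarrow> x = 0" using assms unfolding spd_def
    by (metis inner_zero_right order_less_irrefl)
  then have "invertible M" using invertible_left_inverse matrix_left_invertible_ker by blast
  then have "\<exists>A'. M ** A' = mat 1 \<and> A' ** M = mat 1" unfolding invertible_def by blast
  then have "M ** matrix_inv M = mat 1 \<and> matrix_inv M ** M = mat 1"
    unfolding matrix_inv_def by (rule someI_ex)
  then show "M ** matrix_inv M = mat 1" "matrix_inv M ** M = mat 1" by auto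
qed

lemma spd_inner: fixes M :: "real^'n^'n" assumes "spd M"
  shows "(M *v x) \<bullet> (matrix_inv M *v y) = x \<bullet> y"
proof -
  have "(M *v x) \<bullet> (matrix_inv M *v y) = x \<bullet> (transpose M *v (matrix_inv M *v y))" by (rule adj)
  also have "\<dots> = x \<bullet> y" using assms spd_inv[OF assms]
    unfolding spd_def by (simp only: matrix_vector_mul_assoc matrix_vector_mul_lid)
  finally show ?thesis .
qed

lemma spd_MV: fixes M :: "real^'n^'n" assumes "spd M"
  shows "M *v (matrix_inv M *v y) = y"
  using spd_inv[OF assms] by (simp only: matrix_vector_mul_assoc matrix_vector_mul_lid)

lemma spd_nonneg: fixes M :: "real^'n^'n" assumes "spd M"
  shows "0 \<le> x \<bullet> (M *v x)"
  using assms unfolding spd_def by (cases "x = 0") (auto intro: less_imp_le)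

lemma Mnorm_sq: fixes M :: "real^'n^'n" assumes "spd M"
  shows "(Mnorm M x)\<^sup>2 = x \<bullet> (M *v x)"
  unfolding Mnorm_def using spd_nonneg[OF assms] by simp

lemma Mnorm_neg: "Mnorm M (-x) = Mnorm M x"
  proof -
  have "M *v (-x) = - (M *v x)"
    by (metis diff_0 matrix_vector_mult_diff_distrib matrix_vector_mult_0_right)
  then show ?thesis unfolding Mnorm_def by simp
qed

lemma Mnorm_swap: "Mnorm M (x - y) = Mnorm M (y - x)"
  by (metis Mnorm_neg minus_diff_eq)

lemma tangent:
  fixes h :: "'a::real_inner \<Rightarrow> real"
  assumes cv: "convex_on UNIV h" and gd: "\<And>p. GDERIV h p :> gh p"
  shows "h y - h x \<ge> gh x \<bullet> (y - x)"
proof -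
  define phi where "phi t = h (x + t *\<^sub>R (y - x))" for t :: real
  have "convex_on UNIV phi"
  proof (rule convex_onI)
    fix t a b :: real assume t: "0 < t" "t < 1"
    have eq: "x + ((1 - t) *\<^sub>R a + t *\<^sub>R b) *\<^sub>R (y - x)
       = (1 - t) *\<^sub>R (x + a *\<^sub>R (y - x)) + t *\<^sub>R (x + b *\<^sub>R (y - x))"
      by (simp add: algebra_simps)
    show "phi ((1 - t) *\<^sub>R a + t *\<^sub>R b) \<le> (1 - t) * phi a + t * phi b"
      unfolding phi_def eq using t by (intro convex_onD[OF cv]) auto
  qed auto
  moreover have "(phi has_field_derivative (gh x \<bullet> (y - x))) (at 0 within UNIV)"
  proof -
    have d1: "((\<lambda>t. x + t *\<^sub>R (y - x)) has_derivative (\<lambda>t. t *\<^sub>R (y - x))) (at 0)"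
      by (auto intro!: derivative_eq_intros)
    have d2: "(h has_derivative (\<lambda>k. k \<bullet> gh x)) (at (x + 0 *\<^sub>R (y - x)))"
      using gd[of x] unfolding gderiv_def by simp
    have "(phi has_derivative (\<lambda>t. (t *\<^sub>R (y - x)) \<bullet> gh x)) (at 0)"
      unfolding phi_def using has_derivative_compose[OF d1 d2] by (simp add: o_def)
    then show ?thesis unfolding has_field_derivative_def
      by (rule has_derivative_eq_rhs) (auto simp: mult.commute inner_commute)
  qed
  ultimately have "phi 1 - phi 0 \<ge> (gh x \<bullet> (y - x)) * (1 - 0)"
    by (intro convex_on_imp_above_tangent[where A=UNIV]) auto
  then show ?thesis unfolding phi_def by simp
qed

lemma grad_mono:
  fixes h :: "'a::real_inner \<Rightarrow> real"
  assumes cv: "convex_on UNIV h" and gd: "\<And>p. GDERIV h p :> gh p"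
  shows "0 \<le> (gh x - gh y) \<bullet> (x - y)"
  using tangent[OF cv gd, of x y] tangent[OF cv gd, of y x]
  by (simp add: inner_diff_left inner_diff_right inner_commute)

declare transpose_matrix_vector[simp del]

lemma spd_sym_inner: fixes M :: "real^'n^'n" assumes "spd M"
  shows "x \<bullet> (M *v y) = (M *v x) \<bullet> y"
  using adj[of M x y] assms unfolding spd_def by simp

lemma quad_deriv:
  fixes M :: "real^'n^'n" assumes "spd M"
    and d: "(x has_vector_derivative X) (at t within S)"
  shows "((\<lambda>t. (x t - c) \<bullet> (M *v (x t - c))) has_real_derivative (2 * ((M *v (x t - c)) \<bullet> X))) (at t within S)"
proof -
  have d': "(x has_derivative (\<lambda>h. h *\<^sub>R X)) (at t within S)"
    using d unfolding has_vector_derivative_def .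
  have "((\<lambda>t. (x t - c) \<bullet> (M *v (x t - c))) has_derivative
     (\<lambda>h. (x t - c) \<bullet> (M *v (h *\<^sub>R X - 0)) + (h *\<^sub>R X - 0) \<bullet> (M *v (x t - c)))) (at t within S)"
    by (intro has_derivative_inner has_derivative_diff d' has_derivative_const
        bounded_linear.has_derivative[OF matrix_vector_mul_bounded_linear])
  then show ?thesis unfolding has_field_derivative_def
    apply (rule has_derivative_eq_rhs)
    apply (rule ext)
    apply (simp add: spd_sym_inner[OF assms(1), of "x t - c"] matrix_vector_mult_scaleR)
    apply (metis spd_sym_inner[OF assms(1)] inner_commute)
    done
qed

lemma main_ineq:
  fixes B :: "real^'m^'n"
    and f :: "real^'m \<Rightarrow> real" and gf :: "real^'m \<Rightarrow> real^'m"
    and h :: "real^'n \<Rightarrow> real" and gh :: "real^'n \<Rightarrow> real^'n"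
    and IV :: "real^'m^'m" and IQ :: "real^'n^'n"
    and ustar u :: "real^'m" and pstar p :: "real^'n"
    and muf Lf muhB :: real
  assumes h_grad: "\<And>p. GDERIV h p :> gh p"
    and h_convex: "convex_on UNIV h"
    and saddle1: "gf ustar + transpose B *v pstar = 0"
    and saddle2: "B *v ustar = gh pstar"
    and IV_spd: "spd IV" and IQ_spd: "spd IQ"
    and f_S11: "S11 f gf muf Lf IV"
    and muf_pos: "0 < muf" and muf_le_Lf: "muf \<le> Lf" and Lf_lt2: "Lf < 2"
    and hB_sc: "strongly_convex_wrt
                  (\<lambda>p. h p + 1/2 * (((B ** matrix_inv IV ** transpose B) *v p) \<bullet> p))
                  (\<lambda>p. gh p + (B ** matrix_inv IV ** transpose B) *v p) muhB IQ"
    and muhB_pos: "0 < muhB"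
  shows "- ((IV *v (u - ustar)) \<bullet> (- (matrix_inv IV *v (gf u + transpose B *v p)))
           + (IQ *v (p - pstar)) \<bullet> (- (matrix_inv IQ *v ((gh p + (B ** matrix_inv IV ** transpose B) *v p)
                 - B *v (u - matrix_inv IV *v gf u)))))
       \<ge> min muf ((2 - Lf) * muhB) * (1/2 * (Mnorm IV (u - ustar))\<^sup>2 + 1/2 * (Mnorm IQ (p - pstar))\<^sup>2)
         + muf / 2 * (Mnorm IV ((u + matrix_inv IV *v (transpose B *v p)) - (ustar + matrix_inv IV *v (transpose B *v pstar))))\<^sup>2"
proof -
  define Vi where "Vi = matrix_inv IV"
  define K where "K = B ** Vi ** transpose B"
  define hB where "hB = (\<lambda>p. h p + 1/2 * ((K *v p) \<bullet> p))"
  define ghB where "ghB = (\<lambda>p. gh p + K *v p)"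
  define du where "du = u - ustar"
  define dp where "dp = p - pstar"
  define g where "g = gf u - gf ustar"
  define r where "r = transpose B *v dp"
  define w where "w = Vi *v r"
  define s where "s = du + w"
  define U where "U = (Mnorm IV du)\<^sup>2"
  define P where "P = (Mnorm IQ dp)\<^sup>2"
  define S where "S = (Mnorm IV s)\<^sup>2"
  define Z where "Z = w \<bullet> r"
  define H where "H = (gh p - gh pstar) \<bullet> dp"
  have Vw: "IV *v w = r" unfolding w_def Vi_def by (rule spd_MV[OF IV_spd])
  have Bdot: "dp \<bullet> (B *v y) = y \<bullet> r" for y
    unfolding r_def by (metis adj inner_commute)
  have btp: "transpose B *v p = transpose B *v pstar + r"
    unfolding r_def dp_def by (simp add: matrix_vector_mult_diff_distrib)
  have btps: "transpose B *v pstar = - gf ustar" using saddle1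
    by (simp add: add_eq_0_iff)
  have gb: "gf u + transpose B *v p = g + r"
    unfolding g_def btp btps by simp
  have T1: "- ((IV *v (u - ustar)) \<bullet> (- (matrix_inv IV *v (gf u + transpose B *v p)))) = du \<bullet> g + du \<bullet> r"
    unfolding gb by (simp add: spd_inner[OF IV_spd] du_def inner_add_right)
  have X: "(gh p + (B ** matrix_inv IV ** transpose B) *v p) - B *v (u - matrix_inv IV *v gf u)
      = (gh p - gh pstar) - B *v du + B *v (Vi *v (g + r))"
  proof -
    have "(B ** matrix_inv IV ** transpose B) *v p = B *v (Vi *v (transpose B *v p))"
      unfolding Vi_def by (simp add: matrix_vector_mul_assoc matrix_mul_assoc)
    moreover have "B *v (Vi *v (g + r)) = B *v (Vi *v gf u) + B *v (Vi *v (transpose B *v p))"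
      unfolding gb[symmetric] by (simp add: matrix_vector_right_distrib)
    ultimately show ?thesis
      unfolding du_def Vi_def saddle2[symmetric] by (simp add: matrix_vector_mult_diff_distrib algebra_simps)
  qed
  have T2: "- ((IQ *v (p - pstar)) \<bullet> (- (matrix_inv IQ *v ((gh p + (B ** matrix_inv IV ** transpose B) *v p)
                 - B *v (u - matrix_inv IV *v gf u))))) = H - du \<bullet> r + w \<bullet> g + Z"
  proof -
    have "r \<bullet> (Vi *v (g + r)) = w \<bullet> (g + r)"
      using spd_inner[OF IV_spd, of w "g + r"] unfolding Vw Vi_def .
    then show ?thesis
      unfolding X by (simp add: spd_inner[OF IQ_spd] dp_def[symmetric] inner_diff_right inner_add_right
          Bdot H_def Z_def inner_commute[of "Vi *v (g + r)" r] inner_diff_left inner_commute[of _ dp])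
  qed
  have LHS: "- ((IV *v (u - ustar)) \<bullet> (- (matrix_inv IV *v (gf u + transpose B *v p)))
           + (IQ *v (p - pstar)) \<bullet> (- (matrix_inv IQ *v ((gh p + (B ** matrix_inv IV ** transpose B) *v p)
                 - B *v (u - matrix_inv IV *v gf u)))))
     = s \<bullet> g + H + Z"
    using T1 T2 unfolding s_def by (simp add: inner_add_left inner_add_right inner_commute)
  have Knorm: "(K *v dp) \<bullet> dp = Z"
  proof -
    have "(K *v dp) \<bullet> dp = dp \<bullet> (B *v w)"
      unfolding K_def w_def r_def by (simp add: matrix_vector_mul_assoc matrix_mul_assoc inner_commute)
    then show ?thesis using Bdot[of w] unfolding Z_def by simp
  qed
  have hb1: "muhB / 2 * (Mnorm IQ (pstar - p))\<^sup>2 \<le> bregman hB ghB p pstar"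
    using hB_sc unfolding strongly_convex_wrt_def hB_def ghB_def K_def Vi_def by blast
  have hb2: "muhB / 2 * (Mnorm IQ (p - pstar))\<^sup>2 \<le> bregman hB ghB pstar p"
    using hB_sc unfolding strongly_convex_wrt_def hB_def ghB_def K_def Vi_def by blast
  have hbsum: "bregman hB ghB p pstar + bregman hB ghB pstar p = H + Z"
  proof -
    have "bregman hB ghB p pstar + bregman hB ghB pstar p = (ghB p - ghB pstar) \<bullet> dp"
      unfolding bregman_def dp_def by (simp add: inner_diff_left inner_diff_right inner_commute)
    also have "ghB p - ghB pstar = (gh p - gh pstar) + K *v dp"
      unfolding ghB_def dp_def by (simp add: matrix_vector_mult_diff_distrib)
    finally show ?thesis unfolding H_def using Knorm by (simp add: inner_add_left)
  qed
  have hB_ineq: "muhB * P \<le> H + Z"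
    using hb1 hb2 hbsum unfolding P_def dp_def Mnorm_swap[of IQ pstar p] by linarith
  have Hnn: "0 \<le> H" unfolding H_def dp_def by (rule grad_mono[OF h_convex h_grad])
  define z where "z = ustar - w"
  have f1: "muf / 2 * (Mnorm IV (u - z))\<^sup>2 \<le> bregman f gf z u"
    using f_S11 unfolding S11_def by blast
  have f2: "muf / 2 * (Mnorm IV (ustar - u))\<^sup>2 \<le> bregman f gf u ustar"
    using f_S11 unfolding S11_def by blast
  have f3: "bregman f gf z ustar \<le> Lf / 2 * (Mnorm IV (ustar - z))\<^sup>2"
    using f_S11 unfolding S11_def by blast
  have fid: "bregman f gf z u + bregman f gf u ustar - bregman f gf z ustar = s \<bullet> g"
    unfolding bregman_def s_def g_def du_def z_def
    by (simp add: inner_diff_left inner_diff_right inner_add_left inner_add_right inner_commute)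
  have uz: "u - z = s" unfolding z_def s_def du_def by simp
  have uz2: "ustar - z = w" unfolding z_def by simp
  have Zn: "(Mnorm IV w)\<^sup>2 = Z"
    unfolding Mnorm_sq[OF IV_spd] Vw Z_def ..
  have f_ineq: "muf / 2 * S + muf / 2 * U - Lf / 2 * Z \<le> s \<bullet> g"
    using f1 f2 f3 fid unfolding uz uz2 Zn S_def U_def du_def Mnorm_swap[of IV ustar u] by linarith
  have tv: "(u + matrix_inv IV *v (transpose B *v p)) - (ustar + matrix_inv IV *v (transpose B *v pstar)) = s"
    unfolding s_def w_def du_def Vi_def btp by (simp add: matrix_vector_right_distrib)
  have Unn: "0 \<le> U" "0 \<le> P" unfolding U_def P_def by simp_all
  have Znn: "0 \<le> Z" using Zn by (metis zero_le_power2)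
  define mu where "mu = min muf ((2 - Lf) * muhB)"
  have m1: "mu * U \<le> muf * U" unfolding mu_def using Unn by (intro mult_right_mono) auto
  have m2: "mu * P \<le> ((2 - Lf) * muhB) * P" unfolding mu_def using Unn by (intro mult_right_mono) auto
  have m3: "(2 - Lf) * (muhB * P) \<le> (2 - Lf) * (H + Z)"
    using hB_ineq Lf_lt2 by (intro mult_left_mono) auto
  have m4: "0 \<le> Lf * H"
  proof -
    have "0 \<le> Lf" using muf_pos muf_le_Lf by simp
    then show ?thesis using Hnn by simp
  qed
  have fin: "mu * (1/2 * U + 1/2 * P) + muf / 2 * S \<le> s \<bullet> g + H + Z"
    using f_ineq m1 m2 m3 m4 Hnn Znn by (simp add: algebra_simps)
  show ?thesis
    unfolding LHS tv using fin unfolding mu_def U_def P_def S_def du_def dp_def .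
qed
lemma decay:
  fixes e e' :: "real \<Rightarrow> real" and mu :: real
  assumes d: "\<And>\<tau>. 0 \<le> \<tau> \<Longrightarrow> (e has_real_derivative e' \<tau>) (at \<tau> within {0..})"
    and le: "\<And>\<tau>. 0 \<le> \<tau> \<Longrightarrow> e' \<tau> \<le> - mu * e \<tau>"
    and t: "0 < t"
  shows "e t \<le> exp (- mu * t) * e 0"
proof -
  define phi where "phi \<tau> = exp (mu * \<tau>) * e \<tau>" for \<tau>
  define D where "D \<tau> = mu * exp (mu * \<tau>) * e \<tau> + exp (mu * \<tau>) * e' \<tau>" for \<tau>
  have pd: "(phi has_real_derivative D \<tau>) (at \<tau> within {0..})" if "0 \<le> \<tau>" for \<tau>
    unfolding phi_def D_def
    by (rule derivative_eq_intros d[OF that] refl | simp)+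
  have Dn: "D \<tau> \<le> 0" if "0 \<le> \<tau>" for \<tau>
  proof -
    have "D \<tau> = exp (mu * \<tau>) * (mu * e \<tau> + e' \<tau>)" unfolding D_def by (simp add: algebra_simps)
    moreover have "mu * e \<tau> + e' \<tau> \<le> 0" using le[OF that] by simp
    ultimately show ?thesis by (simp add: mult_nonneg_nonpos)
  qed
  have cont: "continuous_on {0..t} phi"
  proof -
    have "continuous_on {0..} phi"
      by (rule DERIV_continuous_on) (use pd in auto)
    then show ?thesis by (rule continuous_on_subset) auto
  qed
  have pdat: "(phi has_real_derivative D x) (at x)" if "0 < x" for x
  proof -
    have "x \<in> interior {0::real..}" using that by simp
    then have "at x within {0..} = at x" by (rule at_within_interior)
    then show ?thesis using pd[of x] that by simp
  qed
  obtain l z where z: "0 < z" "z < t" "DERIV phi z :> l" "phi t - phi 0 = (t - 0) * l"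
    using MVT[OF t cont] pdat by (metis real_differentiable_def)
  have "l = D z" using DERIV_unique[OF z(3) pdat[OF z(1)]] .
  moreover have "t * D z \<le> 0" using Dn[of z] z t by (simp add: mult_nonneg_nonpos)
  ultimately have "phi t \<le> phi 0" using z by simp
  then have "exp (mu * t) * e t \<le> e 0" unfolding phi_def by simp
  then have "exp (- mu * t) * (exp (mu * t) * e t) \<le> exp (- mu * t) * e 0"
    by (intro mult_left_mono) auto
  then show ?thesis by (simp add: mult.assoc[symmetric] exp_add[symmetric])
qed

theorem theorem3p2:
  fixes B :: "real^'m^'n"
    and f :: "real^'m \<Rightarrow> real" and gf :: "real^'m \<Rightarrow> real^'m"
    and h :: "real^'n \<Rightarrow> real" and gh :: "real^'n \<Rightarrow> real^'n"
    and IV :: "real^'m^'m" and IQ :: "real^'n^'n"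
    and ustar :: "real^'m" and pstar :: "real^'n"
    and muf Lf muhB :: real
  assumes dims: "CARD('n) \<le> CARD('m)"
    and fullrank: "rank B = CARD('n)"
    and f_grad: "\<And>u. GDERIV f u :> gf u"
    and h_grad: "\<And>p. GDERIV h p :> gh p"
    and f_convex: "convex_on UNIV f" and h_convex: "convex_on UNIV h"
    and gf_cont: "continuous_on UNIV gf" and gh_cont: "continuous_on UNIV gh"
    and gf_lip: "lipschitz_map gf" and gh_lip: "lipschitz_map gh"
    and saddle1: "gf ustar + transpose B *v pstar = 0"
    and saddle2: "B *v ustar = gh pstar"
    and IV_spd: "spd IV" and IQ_spd: "spd IQ"
    and f_S11: "S11 f gf muf Lf IV"
    and muf_pos: "0 < muf" and muf_le_Lf: "muf \<le> Lf" and Lf_lt2: "Lf < 2"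
    and hB_sc: "strongly_convex_wrt
                  (\<lambda>p. h p + 1/2 * (((B ** matrix_inv IV ** transpose B) *v p) \<bullet> p))
                  (\<lambda>p. gh p + (B ** matrix_inv IV ** transpose B) *v p) muhB IQ"
    and muhB_pos: "0 < muhB"
  shows "let e = (\<lambda>u. u - matrix_inv IV *v gf u);
             ghB = (\<lambda>p. gh p + (B ** matrix_inv IV ** transpose B) *v p);
             Gu = (\<lambda>u p. - (matrix_inv IV *v (gf u + transpose B *v p)));
             Gp = (\<lambda>u p. - (matrix_inv IQ *v (ghB p - B *v e u)));
             E = (\<lambda>u p. 1/2 * (Mnorm IV (u - ustar))\<^sup>2 + 1/2 * (Mnorm IQ (p - pstar))\<^sup>2);
             muV = muf;
             muQ = (2 - Lf) * muhB;
             mu = min muV muQ;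
             vstar = ustar + matrix_inv IV *v (transpose B *v pstar)
         in 0 < mu
          \<and> (\<forall>u p. - ((IV *v (u - ustar)) \<bullet> Gu u p + (IQ *v (p - pstar)) \<bullet> Gp u p)
                     \<ge> mu * E u p
                       + muf / 2 * (Mnorm IV ((u + matrix_inv IV *v (transpose B *v p)) - vstar))\<^sup>2)
          \<and> (\<forall>(uu :: real \<Rightarrow> real^'m) (pp :: real \<Rightarrow> real^'n).
               (\<forall>t\<ge>0. (uu has_vector_derivative Gu (uu t) (pp t)) (at t within {0..})
                     \<and> (pp has_vector_derivative Gp (uu t) (pp t)) (at t within {0..}))
               \<longrightarrow> (\<forall>t>0. E (uu t) (pp t) \<le> exp (- mu * t) * E (uu 0) (pp 0)))"
proof -
  let ?mu = "min muf ((2 - Lf) * muhB)"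
  have mupos: "0 < ?mu" using muf_pos Lf_lt2 muhB_pos by simp
  have ineq: "\<And>u p. - ((IV *v (u - ustar)) \<bullet> (- (matrix_inv IV *v (gf u + transpose B *v p)))
           + (IQ *v (p - pstar)) \<bullet> (- (matrix_inv IQ *v ((gh p + (B ** matrix_inv IV ** transpose B) *v p)
                 - B *v (u - matrix_inv IV *v gf u)))))
       \<ge> ?mu * (1/2 * (Mnorm IV (u - ustar))\<^sup>2 + 1/2 * (Mnorm IQ (p - pstar))\<^sup>2)
         + muf / 2 * (Mnorm IV ((u + matrix_inv IV *v (transpose B *v p)) - (ustar + matrix_inv IV *v (transpose B *v pstar))))\<^sup>2"
    by (rule main_ineq[OF h_grad h_convex saddle1 saddle2 IV_spd IQ_spd f_S11 muf_pos muf_le_Lf Lf_lt2 hB_sc muhB_pos])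
  have ode: "e t \<le> exp (- ?mu * t) * e 0"
    if hyp: "\<forall>t\<ge>0. (uu has_vector_derivative - (matrix_inv IV *v (gf (uu t) + transpose B *v pp t))) (at t within {0..})
          \<and> (pp has_vector_derivative - (matrix_inv IQ *v ((gh (pp t) + (B ** matrix_inv IV ** transpose B) *v pp t)
                 - B *v (uu t - matrix_inv IV *v gf (uu t))))) (at t within {0..})"
      and e_def: "e = (\<lambda>t. 1/2 * (Mnorm IV (uu t - ustar))\<^sup>2 + 1/2 * (Mnorm IQ (pp t - pstar))\<^sup>2)"
      and t: "0 < t"
    for uu :: "real \<Rightarrow> real^'m" and pp :: "real \<Rightarrow> real^'n" and e t
  proof -
    define GU where "GU \<tau> = - (matrix_inv IV *v (gf (uu \<tau>) + transpose B *v pp \<tau>))" for \<tau>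
    define GP where "GP \<tau> = - (matrix_inv IQ *v ((gh (pp \<tau>) + (B ** matrix_inv IV ** transpose B) *v pp \<tau>)
                 - B *v (uu \<tau> - matrix_inv IV *v gf (uu \<tau>))))" for \<tau>
    define e' where "e' \<tau> = (IV *v (uu \<tau> - ustar)) \<bullet> GU \<tau> + (IQ *v (pp \<tau> - pstar)) \<bullet> GP \<tau>" for \<tau>
    have e_eq: "e = (\<lambda>t. 1/2 * ((uu t - ustar) \<bullet> (IV *v (uu t - ustar))) + 1/2 * ((pp t - pstar) \<bullet> (IQ *v (pp t - pstar))))"
      unfolding e_def Mnorm_sq[OF IV_spd] Mnorm_sq[OF IQ_spd] ..
    have d: "(e has_real_derivative e' \<tau>) (at \<tau> within {0..})" if "0 \<le> \<tau>" for \<tau>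
    proof -
      have a: "(uu has_vector_derivative GU \<tau>) (at \<tau> within {0..})"
        and b: "(pp has_vector_derivative GP \<tau>) (at \<tau> within {0..})"
        using hyp that unfolding GU_def GP_def by auto
      have "((\<lambda>t. 1/2 * ((uu t - ustar) \<bullet> (IV *v (uu t - ustar))) + 1/2 * ((pp t - pstar) \<bullet> (IQ *v (pp t - pstar))))
        has_real_derivative (1/2 * (2 * ((IV *v (uu \<tau> - ustar)) \<bullet> GU \<tau>)) + 1/2 * (2 * ((IQ *v (pp \<tau> - pstar)) \<bullet> GP \<tau>))))
        (at \<tau> within {0..})"
        by (intro DERIV_add DERIV_cmult quad_deriv[OF IV_spd a] quad_deriv[OF IQ_spd b])
      then show ?thesis unfolding e_eq e'_def by simp
    qed
    have le: "e' \<tau> \<le> - ?mu * e \<tau>" if "0 \<le> \<tau>" for \<tau>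
    proof -
      have "?mu * e \<tau> + muf / 2 * (Mnorm IV ((uu \<tau> + matrix_inv IV *v (transpose B *v pp \<tau>)) - (ustar + matrix_inv IV *v (transpose B *v pstar))))\<^sup>2 \<le> - e' \<tau>"
        using ineq[of "uu \<tau>" "pp \<tau>"] unfolding e'_def GU_def GP_def e_def by simp
      moreover have "0 \<le> muf / 2 * (Mnorm IV ((uu \<tau> + matrix_inv IV *v (transpose B *v pp \<tau>)) - (ustar + matrix_inv IV *v (transpose B *v pstar))))\<^sup>2"
        using muf_pos by simp
      ultimately show ?thesis unfolding mult_minus_left by linarith
    qed
    show ?thesis by (rule decay[OF d le t])
  qed
  show ?thesis
    unfolding Let_def
  proof (intro conjI allI impI)
    show "0 < ?mu" by (rule mupos)
  next
    fix u p
    show "?mu * (1/2 * (Mnorm IV (u - ustar))\<^sup>2 + 1/2 * (Mnorm IQ (p - pstar))\<^sup>2)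
         + muf / 2 * (Mnorm IV ((u + matrix_inv IV *v (transpose B *v p)) - (ustar + matrix_inv IV *v (transpose B *v pstar))))\<^sup>2
       \<le> - ((IV *v (u - ustar)) \<bullet> (- (matrix_inv IV *v (gf u + transpose B *v p)))
           + (IQ *v (p - pstar)) \<bullet> (- (matrix_inv IQ *v ((gh p + (B ** matrix_inv IV ** transpose B) *v p)
                 - B *v (u - matrix_inv IV *v gf u)))))"
      by (rule ineq)
  next
    fix uu :: "real \<Rightarrow> real^'m" and pp :: "real \<Rightarrow> real^'n"
    assume h: "\<forall>t\<ge>0. (uu has_vector_derivative - (matrix_inv IV *v (gf (uu t) + transpose B *v pp t))) (at t within {0..})
          \<and> (pp has_vector_derivative - (matrix_inv IQ *v ((gh (pp t) + (B ** matrix_inv IV ** transpose B) *v pp t)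
                 - B *v (uu t - matrix_inv IV *v gf (uu t))))) (at t within {0..})"
    fix t :: real assume t: "0 < t"
    show "1/2 * (Mnorm IV (uu t - ustar))\<^sup>2 + 1/2 * (Mnorm IQ (pp t - pstar))\<^sup>2
        \<le> exp (- ?mu * t) * (1/2 * (Mnorm IV (uu 0 - ustar))\<^sup>2 + 1/2 * (Mnorm IQ (pp 0 - pstar))\<^sup>2)"
      using ode[OF h refl t] by simp
  qed
qed

end
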